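(* Let $Y$ be a real Banach space, $X$ a closed subspace of $Y$ and $Q:Y\to Y/X$ the quotient map. Let $(B_n)_{n\ge1}$ be a uniformly bounded sequence of bounded operators on $Y$ such that $\lim_{n\to\infty}\|QB_n|_X\|_{X\to Y/X}=0$ and $\limsup_{n\to\infty}\|B_n|_X\|_{X\to Y}\le1$. Then for every $\delta>0$ there is an infinite subset $\mathbb M\subseteq\mathbb N$ such that for all $k\ge1$ and all $n_1<n_2<\dots<n_k$ in $\mathbb M$, $$\|(B_{n_1}B_{n_2}\cdots B_{n_k})|_X\|_{X\to Y}<1+\delta.$$
   Context: For an operator $B$ on $Y$, $\|B|_X\|_{X\to Y}$ denotes the norm of its restriction to $X$. *)

theory Defs
  imports "HOL-Analysis.Analysis" "HOL-Library.Liminf_Limsup"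
begin

definition restr_norm :: "('a::real_normed_vector \<Rightarrow>\<^sub>L 'a) \<Rightarrow> 'a set \<Rightarrow> real" where
  "restr_norm B X = (SUP x\<in>{x\<in>X. norm x \<le> 1}. norm (blinfun_apply B x))"

text \<open>Norm of Q B restricted to X, as a map X to Y/X, where Q is the quotient map;
  the quotient norm of Q y is the distance from y to X.\<close>
definition quot_restr_norm :: "('a::real_normed_vector \<Rightarrow>\<^sub>L 'a) \<Rightarrow> 'a set \<Rightarrow> real" where
  "quot_restr_norm B X = (SUP x\<in>{x\<in>X. norm x \<le> 1}. infdist (blinfun_apply B x) X)"

definition op_prod :: "(nat \<Rightarrow> ('a::real_normed_vector \<Rightarrow>\<^sub>L 'a)) \<Rightarrow> nat list \<Rightarrow> ('a \<Rightarrow>\<^sub>L 'a)" where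
  "op_prod B ns = foldr (\<lambda>n A. B n o\<^sub>L A) ns id_blinfun"

end

theory Submission
  imports Defs
begin

lemma op_prod_append:
  "op_prod B (xs @ ys) = op_prod B xs o\<^sub>L op_prod B ys"
  by (induction xs) (auto simp: op_prod_def intro!: blinfun_eqI)

lemma op_prod_norm:
  assumes "\<forall>n. norm (B n) \<le> K" "K \<ge> 1"
  shows "norm (op_prod B ns) \<le> K ^ length ns"
proof (induction ns)
  case Nil
  then show ?case using norm_blinfun_id_le by (simp add: op_prod_def)
next
  case (Cons n ns)
  have "op_prod B (n # ns) = B n o\<^sub>L op_prod B ns" by (simp add: op_prod_def)
  then have "norm (op_prod B (n # ns)) \<le> norm (B n) * norm (op_prod B ns)"
    by (simp add: norm_blinfun_compose)
  also have "\<dots> \<le> K * K ^ length ns"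
    using Cons assms by (intro mult_mono) auto
  finally show ?case by simp
qed

lemma step:
  fixes T :: "'a::real_normed_vector \<Rightarrow>\<^sub>L 'a"
  assumes X: "subspace X" and y: "y \<in> X" and q: "quot_restr_norm T X < \<gamma>"
  shows "\<exists>y'\<in>X. norm (T y - y') \<le> \<gamma> * norm y \<and> norm y' \<le> (restr_norm T X + \<gamma>) * norm y"
proof (cases "y = 0")
  case True
  then show ?thesis using X by (intro bexI[of _ 0]) (auto simp: subspace_0)
next
  case False
  define S where "S = {x\<in>X. norm x \<le> 1}"
  define u where "u = y /\<^sub>R norm y"
  have uS: "u \<in> S" using X y False by (auto simp: S_def u_def subspace_scale)
  have X0: "0 \<in> X" using X by (simp add: subspace_0)
  have bT: "norm (T x) \<le> norm T" if "x \<in> S" for x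
  proof -
    have "norm (T x) \<le> norm T * norm x" by (rule norm_blinfun)
    also have "\<dots> \<le> norm T" using that by (auto simp: S_def intro: mult_left_le)
    finally show ?thesis .
  qed
  have bdd1: "bdd_above ((\<lambda>x. norm (T x)) ` S)" using bT by (intro bdd_aboveI2) auto
  have "infdist (T x) X \<le> norm T" if "x \<in> S" for x
    using infdist_le[OF X0, of "T x"] bT[OF that] by simp
  then have bdd2: "bdd_above ((\<lambda>x. infdist (T x) X) ` S)" by (intro bdd_aboveI2) auto
  have a: "norm (T u) \<le> restr_norm T X"
    unfolding restr_norm_def S_def[symmetric] by (rule cSUP_upper[OF uS bdd1])
  have "infdist (T u) X \<le> quot_restr_norm T X"
    unfolding quot_restr_norm_def S_def[symmetric] by (rule cSUP_upper[OF uS bdd2])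
  with q have "infdist (T u) X < \<gamma>" by simp
  then have "(INF a\<in>X. dist (T u) a) < \<gamma>" using infdist_notempty[of X "T u"] X0 by (metis empty_iff)
  then obtain z where z: "z \<in> X" "dist (T u) z < \<gamma>"
    using X0 by (subst (asm) cINF_less_iff) (auto intro: bdd_belowI2[where m=0])
  have yu: "y = norm y *\<^sub>R u" using False by (simp add: u_def)
  have Ty: "T y = norm y *\<^sub>R T u" by (subst yu) (simp add: blinfun.scaleR_right)
  show ?thesis
  proof (intro bexI[of _ "norm y *\<^sub>R z"] conjI)
    show "norm y *\<^sub>R z \<in> X" using X z by (simp add: subspace_scale)
    have "norm (T y - norm y *\<^sub>R z) = norm y * dist (T u) z"
      by (simp add: Ty dist_norm flip: scaleR_diff_right)
    then show "norm (T y - norm y *\<^sub>R z) \<le> \<gamma> * norm y"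
      using z by (metis less_imp_le mult.commute mult_left_mono norm_ge_zero)
    have "norm z \<le> norm (T u) + dist (T u) z"
      by (metis dist_norm norm_triangle_sub add.commute norm_minus_commute diff_add_cancel norm_triangle_ineq4 order_trans)
    also have "\<dots> \<le> restr_norm T X + \<gamma>" using a z by simp
    finally show "norm (norm y *\<^sub>R z) \<le> (restr_norm T X + \<gamma>) * norm y"
      by (simp add: mult.commute mult_left_mono)
  qed
qed

primrec selg :: "(nat \<Rightarrow> nat \<Rightarrow> bool) \<Rightarrow> nat \<Rightarrow> nat" where
  "selg P 0 = (SOME n. P 0 n)"
| "selg P (Suc i) = (SOME n. selg P i < n \<and> P (Suc i) n)"

lemma selg:
  assumes "\<forall>i N. \<exists>n>N. P i n"
  shows "P i (selg P i)" "strict_mono (selg P)"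
proof -
  have A: "selg P i < selg P (Suc i) \<and> P (Suc i) (selg P (Suc i))" for i
    using someI_ex[of "\<lambda>n. selg P i < n \<and> P (Suc i) n"] assms by auto
  show "P i (selg P i)"
  proof (cases i)
    case 0
    then show ?thesis using someI_ex[of "\<lambda>n. P 0 n"] assms by auto
  next
    case (Suc k)
    then show ?thesis using A[of k] by simp
  qed
  show "strict_mono (selg P)" using A by (simp add: strict_mono_Suc_iff)
qed

lemma final_ineq:
  fixes d u v :: real
  assumes "d > 0" "v \<ge> 0" "u \<ge> 0" "u * (3 + 2 * d) \<le> v" "v \<le> d / 2"
  shows "(1 + d - 2* v) * (1 + 2* u) + u \<le> 1 + d - v"
proof -
  have "(1 + d - 2* v) * (1 + 2* u) + u = 1 + d - 2* v + 2* u*(1+d-2* v) + u"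
    by (simp add: algebra_simps)
  also have "2* u*(1+d-2* v) \<le> 2* u*(1+d)" using assms by (intro mult_left_mono) auto
  finally have "(1 + d - 2* v) * (1 + 2* u) + u \<le> 1 + d - 2* v + 2* u*(1+d) + u" by simp
  moreover have "2* u*(1+d) + u = u * (3 + 2 * d)" by (simp add: algebra_simps)
  ultimately show ?thesis using assms by linarith
qed

lemma div_pow2_le: "0 \<le> d \<Longrightarrow> d / 2^k \<le> (d::real)"
proof -
  assume d: "0 \<le> d"
  have "d / 2^k \<le> d / 1" using d by (intro divide_left_mono) auto
  then show ?thesis by simp
qed

theorem lemma4p1:
  fixes X :: "'a::banach set" and B :: "nat \<Rightarrow> ('a \<Rightarrow>\<^sub>L 'a)"
  assumes "subspace X" and "closed X"
    and "\<exists>C. \<forall>n. norm (B n) \<le> C"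
    and "(\<lambda>n. quot_restr_norm (B n) X) \<longlonglongrightarrow> 0"
    and "limsup (\<lambda>n. ereal (restr_norm (B n) X)) \<le> 1"
  shows "\<forall>\<delta>>0. \<exists>M::nat set. infinite M \<and>
           (\<forall>ns. ns \<noteq> [] \<and> sorted_wrt (<) ns \<and> set ns \<subseteq> M \<longrightarrow>
                 restr_norm (op_prod B ns) X < 1 + \<delta>)"
proof (intro allI impI)
  fix \<delta> :: real assume \<delta>: "\<delta> > 0"
  obtain C where C: "\<forall>n. norm (B n) \<le> C" using assms(3) by blast
  define K where "K = max C 1"
  have K: "\<forall>n. norm (B n) \<le> K" "K \<ge> 1" using C by (auto simp: K_def intro: order_trans)
  define s :: "nat \<Rightarrow> real" where "s i = \<delta> / (2^(i+1) * (3+2*\<delta>))" for i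
  define \<gamma> :: "nat \<Rightarrow> real" where "\<gamma> i = s i / K^i" for i
  have spos: "s i > 0" for i using \<delta> by (simp add: s_def)
  have gpos: "\<gamma> i > 0" for i using spos K by (simp add: \<gamma>_def)
  have gs: "\<gamma> i \<le> s i" for i
  proof -
    have "1 \<le> K^i" using K by simp
    then show ?thesis using spos[of i] unfolding \<gamma>_def by (simp add: divide_le_eq mult_le_cancel_left1)
  qed
  have Kg: "K^i * \<gamma> i = s i" for i using K by (simp add: \<gamma>_def)
  define P where "P i n \<longleftrightarrow> quot_restr_norm (B n) X < \<gamma> i \<and> restr_norm (B n) X \<le> 1 + s i" for i n
  have ev: "\<forall>i N. \<exists>n>N. P i n"
  proof (intro allI)
    fix i N
    have e1: "eventually (\<lambda>n. quot_restr_norm (B n) X < \<gamma> i) sequentially"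
      using order_tendstoD(2)[OF assms(4) gpos[of i]] .
    have "limsup (\<lambda>n. ereal (restr_norm (B n) X)) < ereal (1 + s i)"
      using assms(5) spos[of i] by (simp add: order_le_less_trans)
    then have e2: "eventually (\<lambda>n. ereal (restr_norm (B n) X) < ereal (1 + s i)) sequentially"
      by (rule Limsup_lessD)
    have "eventually (P i) sequentially"
      using eventually_conj[OF e1 e2] by (rule eventually_mono) (auto simp: P_def)
    then obtain N0 where "\<forall>n\<ge>N0. P i n" by (auto simp: eventually_sequentially)
    then show "\<exists>n>N. P i n" by (intro exI[of _ "max N0 (N+1)"]) auto
  qed
  define g where "g = selg P"
  have gP: "P i (g i)" for i using selg(1)[OF ev] by (simp add: g_def)
  have gm: "strict_mono g" using selg(2)[OF ev] by (simp add: g_def)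
  have claim: "\<forall>i. sorted_wrt (<) ns \<longrightarrow> set ns \<subseteq> g ` {..i} \<longrightarrow>
      (\<forall>x\<in>X. norm (op_prod B ns x) \<le> (1+\<delta>-\<delta>/2^(i+1)) * norm x)" for ns
  proof (induction ns rule: rev_induct)
    case Nil
    show ?case
    proof (intro allI impI ballI)
      fix i and x :: 'a
      have "\<delta>/2^(i+1) \<le> \<delta>" using \<delta> by (intro div_pow2_le) simp
      then have "norm x \<le> (1+\<delta>-\<delta>/2^(i+1)) * norm x"
        by (intro mult_le_cancel_right1[THEN iffD2]) auto
      then show "norm (op_prod B [] x) \<le> (1+\<delta>-\<delta>/2^(i+1)) * norm x"
        by (simp add: op_prod_def)
    qed
  next
    case (snoc m ns)
    show ?case
    proof (intro allI impI ballI)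
      fix i and x :: 'a
      assume so: "sorted_wrt (<) (ns @ [m])" and sub: "set (ns @ [m]) \<subseteq> g ` {..i}" and x: "x \<in> X"
      obtain j where j: "j \<le> i" "m = g j" using sub by auto
      have lt: "\<forall>n\<in>set ns. n < m" using so by (simp add: sorted_wrt_append)
      have so': "sorted_wrt (<) ns" using so by (simp add: sorted_wrt_append)
      have sub': "set ns \<subseteq> g ` {..<j}"
      proof
        fix n assume n: "n \<in> set ns"
        then obtain k where "n = g k" using sub by auto
        moreover have "g k < g j" using lt n j \<open>n = g k\<close> by auto
        ultimately show "n \<in> g ` {..<j}" using gm by (auto simp: strict_mono_less)
      qed
      have len: "length ns \<le> j"
      proof -
        have "length ns = card (set ns)" using so' by (simp add: strict_sorted_iff distinct_card)
        also have "\<dots> \<le> card (g ` {..<j})" using sub' by (intro card_mono) auto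
        also have "\<dots> \<le> j" using card_image_le[of "{..<j}" g] by simp
        finally show ?thesis .
      qed
      have F': "norm (op_prod B ns y) \<le> (1+\<delta>-\<delta>/2^j) * norm y" if y: "y \<in> X" for y
      proof (cases j)
        case 0
        then have "ns = []" using sub' by auto
        then show ?thesis using 0 by (simp add: op_prod_def)
      next
        case (Suc j')
        have "set ns \<subseteq> g ` {..j'}" using sub' Suc by auto
        then show ?thesis using snoc.IH so' y Suc by auto
      qed
      have Pm: "quot_restr_norm (B m) X < \<gamma> j" "restr_norm (B m) X \<le> 1 + s j"
        using gP[of j] j by (auto simp: P_def)
      obtain y' where y': "y' \<in> X" "norm (B m x - y') \<le> \<gamma> j * norm x"
        "norm y' \<le> (restr_norm (B m) X + \<gamma> j) * norm x"
        using step[OF assms(1) x Pm(1)] by blast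
      have eq: "op_prod B (ns @ [m]) x = op_prod B ns y' + op_prod B ns (B m x - y')"
        by (simp add: op_prod_append blinfun.diff_right) (simp add: op_prod_def)
      have b0: "0 \<le> 1+\<delta>-\<delta>/2^j"
      proof -
        have "\<delta>/2^j \<le> \<delta>" using \<delta> by (intro div_pow2_le) simp
        then show ?thesis using \<delta> by simp
      qed
      have n1: "norm (op_prod B ns y') \<le> (1+\<delta>-\<delta>/2^j) * ((1 + 2 * s j) * norm x)"
      proof -
        have "norm y' \<le> (1 + 2 * s j) * norm x"
          using y'(3) Pm(2) gs[of j] by (smt (verit) mult_right_mono norm_ge_zero)
        then show ?thesis using F'[OF y'(1)] b0 by (smt (verit) mult_left_mono)
      qed
      have n2: "norm (op_prod B ns (B m x - y')) \<le> s j * norm x"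
      proof -
        have "norm (op_prod B ns (B m x - y')) \<le> norm (op_prod B ns) * norm (B m x - y')"
          by (rule norm_blinfun)
        also have "\<dots> \<le> K^j * (\<gamma> j * norm x)"
        proof (intro mult_mono y'(2))
          show "norm (op_prod B ns) \<le> K^j"
            using op_prod_norm[OF K, of ns] len K(2) power_increasing[of "length ns" j K] by linarith
        qed (use K in auto)
        also have "\<dots> = s j * norm x" using Kg[of j] by simp
        finally show ?thesis .
      qed
      have fin: "(1+\<delta>-2*(\<delta>/2^(j+1))) * (1 + 2 * s j) + s j \<le> 1 + \<delta> - \<delta>/2^(j+1)"
      proof (rule final_ineq[OF \<delta>])
        show "0 \<le> \<delta>/2^(j+1)" using \<delta> by simp
        show "0 \<le> s j" using spos[of j] by simp
        show "s j * (3 + 2*\<delta>) \<le> \<delta>/2^(j+1)" using \<delta> by (simp add: s_def)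
        show "\<delta>/2^(j+1) \<le> \<delta>/2" using \<delta> div_pow2_le[of "\<delta>/2" j] by (simp add: field_simps)
      qed
      have h2: "2*(\<delta>/2^(j+1)) = \<delta>/2^j" by simp
      have mono: "\<delta>/2^(i+1) \<le> \<delta>/2^(j+1)"
        using \<delta> j(1) by (intro divide_left_mono) (auto intro: power_increasing)
      have "norm (op_prod B (ns @ [m]) x) \<le> norm (op_prod B ns y') + norm (op_prod B ns (B m x - y'))"
        unfolding eq by (rule norm_triangle_ineq)
      also have "\<dots> \<le> ((1+\<delta>-\<delta>/2^j) * (1 + 2 * s j) + s j) * norm x"
        using n1 n2 by (simp add: algebra_simps)
      also have "\<dots> \<le> (1+\<delta>-\<delta>/2^(i+1)) * norm x"
        using fin mono unfolding h2 by (intro mult_right_mono) auto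
      finally show "norm (op_prod B (ns @ [m]) x) \<le> (1+\<delta>-\<delta>/2^(i+1)) * norm x" .
    qed
  qed
  show "\<exists>M::nat set. infinite M \<and>
           (\<forall>ns. ns \<noteq> [] \<and> sorted_wrt (<) ns \<and> set ns \<subseteq> M \<longrightarrow>
                 restr_norm (op_prod B ns) X < 1 + \<delta>)"
  proof (intro exI[of _ "range g"] conjI allI impI)
    show "infinite (range g)" using gm by (simp add: range_inj_infinite strict_mono_imp_inj_on)
    fix ns assume ns: "ns \<noteq> [] \<and> sorted_wrt (<) ns \<and> set ns \<subseteq> range g"
    define i where "i = Max (set ns)"
    have subi: "set ns \<subseteq> g ` {..i}"
    proof
      fix n assume n: "n \<in> set ns"
      then obtain k where k: "n = g k" using ns by auto
      have "k \<le> g k" using gm by (rule seq_suble)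
      moreover have "n \<le> i" using n by (simp add: i_def)
      ultimately show "n \<in> g ` {..i}" using k by auto
    qed
    have bd: "\<forall>x\<in>X. norm (op_prod B ns x) \<le> (1+\<delta>-\<delta>/2^(i+1)) * norm x"
      using claim[of ns] ns subi by blast
    have bpos: "0 \<le> 1+\<delta>-\<delta>/2^(i+1)"
    proof -
      have "\<delta>/2^(i+1) \<le> \<delta>" using \<delta> by (intro div_pow2_le) simp
      then show ?thesis using \<delta> by simp
    qed
    have X0: "0 \<in> X" using assms(1) by (simp add: subspace_0)
    have "restr_norm (op_prod B ns) X \<le> 1+\<delta>-\<delta>/2^(i+1)"
      unfolding restr_norm_def
    proof (rule cSUP_least)
      show "{x \<in> X. norm x \<le> 1} \<noteq> {}" using X0 by auto
      fix x assume "x \<in> {x \<in> X. norm x \<le> 1}"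
      then show "norm (op_prod B ns x) \<le> 1+\<delta>-\<delta>/2^(i+1)"
        using bd bpos by (smt (verit) mem_Collect_eq mult_left_le)
    qed
    also have "\<dots> < 1 + \<delta>" using \<delta> by simp
    finally show "restr_norm (op_prod B ns) X < 1 + \<delta>" .
  qed
qed

end
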